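(* Let $p>q>1$ be relatively prime integers, let $\mathbf{x}$ be a sequence over a finite alphabet $B$, and let the tree $T(L_{\frac pq})$ be decorated by $\mathbf{x}$. If there exists some $h\ge0$ such that each factor in $F_h^\infty$ can be extended to at most one factor in $F^\infty_{h+1,w_{j,0}}$ for every $0\le j\le q-1$, then $\mathbf{x}$ is $\frac pq$-automatic.
   Context: $A_p=\{0,\ldots,p-1\}$; for $w=w_\ell\cdots w_0\in A_p^*$, $\mathrm{val}_{\frac pq}(w)=\sum_{i=0}^{\ell}\frac{w_i}{q}(\frac pq)^i$; $\mathrm{rep}_{\frac pq}(n)$ is the unique word not starting with $0$ of value $n$ ($\mathrm{rep}_{\frac pq}(0)=\varepsilon$); $L_{\frac pq}=\{\mathrm{rep}_{\frac pq}(n):n\ge0\}$. $\mathbf{x}$ is $\frac pq$-automatic if there is a deterministic finite automaton with output $(Q,q_0,A_p,\delta,\tau:Q\to B)$ with $x_n=\tau(\delta(q_0,\mathrm{rep}_{\frac pq}(n)))$ for all $n$. $T(L_{\frac pq})$ is the tree whose nodes are the words of $L_{\frac pq}$, with an edge labeled $d$ from $w$ to $wd$ whenever both are in $L_{\frac pq}$; node $w$ is decorated by $x_{\mathrm{val}_{\frac pq}(w)}$. For $w\in L_{\frac pq}$, the factor $T[w,h]$ has domain $w^{-1}L_{\frac pq}\cap A_p^{\le h}$ (where $w^{-1}L=\{u:wu\in L\}$), with node $u$ decorated by $x_{\mathrm{val}_{\frac pq}(wu)}$; two factors of the same height are equal if they have the same domain and same decorations. $F_h^\infty$ is the set of factors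 of height $h$ equal to $T[w,h]$ for infinitely many $w$; $F^\infty_{h,a}$ is the set of those in $F_h^\infty$ whose radix-least word of length $h$ in the domain ends with the letter $a$. A factor $U$ of height $h$ is extended to a factor $U'$ of height $h+1$ if the truncation of $U'$ to words of length at most $h$ equals $U$. For $0\le j\le q-1$, $w_j$ is the word listing in increasing order the letters $a\in A_p$ with $a\equiv -pj\pmod q$, and $w_{j,0}$ is its first letter. *)

theory Defs
  imports Complex_Main
begin

text \<open>Words over A_p are lists of naturals, most significant letter first:
  the list [w_l, ..., w_0].\<close>

definition alph :: "nat \<Rightarrow> nat set" where
  "alph p = {0..<p}"

definition val_pq :: "nat \<Rightarrow> nat \<Rightarrow> nat list \<Rightarrow> real" where
  "val_pq p q w = (\<Sum>i<length w. (real (w ! (length w - 1 - i)) / real q) * (real p / real q) ^ i)"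

definition rep_pq :: "nat \<Rightarrow> nat \<Rightarrow> nat \<Rightarrow> nat list" where
  "rep_pq p q n = (THE w. w \<in> lists (alph p) \<and> (w = [] \<or> hd w \<noteq> 0) \<and> val_pq p q w = real n)"

definition L_pq :: "nat \<Rightarrow> nat \<Rightarrow> nat list set" where
  "L_pq p q = range (rep_pq p q)"

definition pq_automatic :: "nat \<Rightarrow> nat \<Rightarrow> (nat \<Rightarrow> 'b) \<Rightarrow> bool" where
  "pq_automatic p q x \<longleftrightarrow>
    (\<exists>(Q::nat set) q0 \<delta> (\<tau>::nat \<Rightarrow> 'b).
       finite Q \<and> q0 \<in> Q \<and> (\<forall>s\<in>Q. \<forall>a<p. \<delta> s a \<in> Q) \<and>
       (\<forall>n. x n = \<tau> (foldl \<delta> q0 (rep_pq p q n))))"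

definition factor :: "nat \<Rightarrow> nat \<Rightarrow> (nat \<Rightarrow> 'b) \<Rightarrow> nat list \<Rightarrow> nat \<Rightarrow> nat list \<Rightarrow> 'b option" where
  "factor p q x w h = (\<lambda>u. if w @ u \<in> L_pq p q \<and> length u \<le> h
                           then Some (x (nat \<lfloor>val_pq p q (w @ u)\<rfloor>)) else None)"

definition F_inf :: "nat \<Rightarrow> nat \<Rightarrow> (nat \<Rightarrow> 'b) \<Rightarrow> nat \<Rightarrow> (nat list \<Rightarrow> 'b option) set" where
  "F_inf p q x h = {U. infinite {w \<in> L_pq p q. factor p q x w h = U}}"

definition radix_le :: "nat list \<Rightarrow> nat list \<Rightarrow> bool" where
  "radix_le u v \<longleftrightarrow> length u < length v \<or>
     (length u = length v \<and> (u = v \<or> (u, v) \<in> lexord {(a, b). a < b}))"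

definition F_inf_a :: "nat \<Rightarrow> nat \<Rightarrow> (nat \<Rightarrow> 'b) \<Rightarrow> nat \<Rightarrow> nat \<Rightarrow> (nat list \<Rightarrow> 'b option) set" where
  "F_inf_a p q x h a = {U \<in> F_inf p q x h.
     \<exists>u. U u \<noteq> None \<and> length u = h \<and>
         (\<forall>v. U v \<noteq> None \<and> length v = h \<longrightarrow> radix_le u v) \<and>
         u \<noteq> [] \<and> last u = a}"

definition extends :: "nat \<Rightarrow> (nat list \<Rightarrow> 'b option) \<Rightarrow> (nat list \<Rightarrow> 'b option) \<Rightarrow> bool" where
  "extends h U U' \<longleftrightarrow> (\<lambda>u. if length u \<le> h then U' u else None) = U"

definition wj0 :: "nat \<Rightarrow> nat \<Rightarrow> nat \<Rightarrow> nat" where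
  "wj0 p q j = (LEAST a. a < p \<and> (int a + int p * int j) mod int q = 0)"

end

theory Submission
  imports Defs "HOL-Number_Theory.Cong"
begin

lemma val_nil[simp]: "val_pq p q [] = 0"
  by (simp add: val_pq_def)

lemma val_snoc: "val_pq p q (w @ [a]) = real a / real q + (real p / real q) * val_pq p q w"
proof -
  have "val_pq p q (w @ [a]) = (\<Sum>i<Suc (length w). (real ((w@[a]) ! (length w - i)) / real q) * (real p / real q) ^ i)"
    by (simp add: val_pq_def)
  also have "\<dots> = real a / real q + (\<Sum>i<length w. (real ((w@[a]) ! (length w - Suc i)) / real q) * (real p / real q) ^ Suc i)"
    by (subst sum.lessThan_Suc_shift) simp
  also have "(\<Sum>i<length w. (real ((w@[a]) ! (length w - Suc i)) / real q) * (real p / real q) ^ Suc i)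
      = (real p / real q) * val_pq p q w"
    unfolding val_pq_def sum_distrib_left
    by (rule sum.cong) (auto simp: nth_append)
  finally show ?thesis .
qed

lemma val_nonneg: "val_pq p q w \<ge> 0"
  by (induct w rule: rev_induct) (auto simp: val_snoc)

lemma val_pos: "w \<noteq> [] \<Longrightarrow> hd w \<noteq> 0 \<Longrightarrow> q > 0 \<Longrightarrow> p > 0 \<Longrightarrow> val_pq p q w > 0"
proof (induct w rule: rev_induct)
  case Nil then show ?case by simp
next
  case (snoc a w)
  show ?case
  proof (cases "w = []")
    case True then show ?thesis using snoc val_snoc[of p q "[]" a] by simp
  next
    case False
    then have "val_pq p q w > 0" using snoc by simp
    moreover have "real a / real q \<ge> 0" by simp
    ultimately show ?thesis using snoc by (simp add: val_snoc add_nonneg_pos)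
  qed
qed

lemma val_denom: "\<exists>k::nat. val_pq p q w * real q ^ length w = real k"
proof (induct w rule: rev_induct)
  case Nil then show ?case by simp
next
  case (snoc a w)
  then obtain k where k: "val_pq p q w * real q ^ length w = real k" by blast
  show ?case
  proof (cases "q = 0")
    case True then show ?thesis by simp
  next
    case False
    have "val_pq p q (w @ [a]) * real q ^ length (w @ [a]) = real a * real q ^ length w + real p * (val_pq p q w * real q ^ length w)"
      using False by (simp add: val_snoc field_simps)
    also have "\<dots> = real (a * q ^ length w + p * k)" using k by simp
    finally show ?thesis by blast
  qed
qed

lemma int_from_coprime:
  fixes r :: real
  assumes "coprime p q" "real p * r = of_int i" "r * real q ^ m = of_int k"
  shows "r \<in> \<int>"
proof -
  have "coprime (int p) (int q ^ m)" using assms(1) by simp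
  then have "gcd (int p) (int q ^ m) = 1" by simp
  then obtain u v where uv: "u * int p + v * int q ^ m = 1" using bezout_int[of "int p" "int q ^ m"] by auto
  have "r = r * of_int (u * int p + v * int q ^ m)" using uv by simp
  also have "\<dots> = of_int u * (real p * r) + of_int v * (r * real q ^ m)" by (simp add: algebra_simps)
  also have "\<dots> = of_int (u * i + v * k)" using assms by simp
  finally show ?thesis by (metis Ints_of_int)
qed

definition vw :: "nat \<Rightarrow> nat list \<Rightarrow> bool" where
  "vw p w \<longleftrightarrow> w \<in> lists (alph p) \<and> (w = [] \<or> hd w \<noteq> 0)"

definition nv :: "nat \<Rightarrow> nat \<Rightarrow> nat list \<Rightarrow> nat" where
  "nv p q w = nat \<lfloor>val_pq p q w\<rfloor>"

context
  fixes p q :: nat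
  assumes q1: "q > 1" and pq: "p > q" and cop: "coprime p q"
begin

lemma integral_prefix:
  assumes "val_pq p q (w @ [a]) = real n"
  shows "\<exists>m. val_pq p q w = real m"
proof -
  have "real p * val_pq p q w = real q * real n - real a"
    using assms q1 by (simp add: val_snoc field_simps)
  then have e1: "real p * val_pq p q w = of_int (int q * int n - int a)" by simp
  obtain k where e2: "val_pq p q w * real q ^ length w = real k" using val_denom by blast
  have "val_pq p q w \<in> \<int>"
    by (rule int_from_coprime[OF cop e1, of "length w" "int k"]) (use e2 in simp)
  then obtain i where i: "val_pq p q w = of_int i" by (auto elim: Ints_cases)
  have "i \<ge> 0" using val_nonneg[of p q w] i by simp
  then show ?thesis using i by (intro exI[of _ "nat i"]) simp
qed

lemma vw_butlast: "vw p (w @ [a]) \<Longrightarrow> vw p w \<and> a < p"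
  by (cases w) (auto simp: vw_def alph_def)

lemma uniq: "vw p w \<Longrightarrow> vw p w' \<Longrightarrow> val_pq p q w = real n \<Longrightarrow> val_pq p q w' = real n \<Longrightarrow> w = w'"
proof (induct n arbitrary: w w' rule: less_induct)
  case (less n)
  have pos: "\<And>u. vw p u \<Longrightarrow> u \<noteq> [] \<Longrightarrow> val_pq p q u > 0"
    using val_pos q1 pq by (auto simp: vw_def)
  show ?case
  proof (cases "w = [] \<or> w' = []")
    case True
    then have "n = 0" using less.prems by auto
    have "w = []"
    proof (rule ccontr)
      assume "w \<noteq> []" then have "val_pq p q w > 0" using pos less.prems(1) by blast
      with less.prems(3) \<open>n = 0\<close> show False by simp
    qed
    moreover have "w' = []"
    proof (rule ccontr)
      assume "w' \<noteq> []" then have "val_pq p q w' > 0" using pos less.prems(2) by blast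
      with less.prems(4) \<open>n = 0\<close> show False by simp
    qed
    ultimately show ?thesis by simp
  next
    case False
    then obtain bw a bw' a' where w: "w = bw @ [a]" and w': "w' = bw' @ [a']"
      by (metis rev_exhaust)
    obtain m where m: "val_pq p q bw = real m" using integral_prefix less.prems w by blast
    obtain m' where m': "val_pq p q bw' = real m'" using integral_prefix less.prems w' by blast
    have v1: "vw p bw" "a < p" using vw_butlast less.prems w by auto
    have v2: "vw p bw'" "a' < p" using vw_butlast less.prems w' by auto
    have "real (q * n) = real (p * m + a)"
      using less.prems(3) w m q1 by (simp add: val_snoc field_simps)
    then have e1: "q * n = p * m + a" by linarith
    have "real (q * n) = real (p * m' + a')"
      using less.prems(4) w' m' q1 by (simp add: val_snoc field_simps)
    then have e2: "q * n = p * m' + a'" by linarith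
    have mm: "m = (q * n) div p" using e1 v1 by simp
    have "m' = (q * n) div p" using e2 v2 by simp
    with mm have mm': "m = m'" by simp
    with e1 e2 have aa: "a = a'" by simp
    have "n > 0" using pos less.prems w by fastforce
    have "q * n < p * n" using pq \<open>n > 0\<close> by simp
    then have "p * m < p * n" using e1 by linarith
    then have "m < n" by simp
    from less.hyps[OF this v1(1) v2(1) m] m' mm' aa w w' show ?thesis by simp
  qed
qed

lemma exist: "\<exists>w. vw p w \<and> val_pq p q w = real n"
proof (induct n rule: less_induct)
  case (less n)
  show ?case
  proof (cases "n = 0")
    case True then show ?thesis by (intro exI[of _ "[]"]) (simp add: vw_def)
  next
    case False
    define m where "m = (q * n) div p"
    define a where "a = (q * n) mod p"
    have qn: "q * n = p * m + a" by (simp add: m_def a_def)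
    have "p * m \<le> q * n" by (simp add: qn)
    also have "\<dots> < p * n" using pq False by simp
    finally have "m < n" by simp
    then obtain u where u: "vw p u" "val_pq p q u = real m" using less by blast
    have ap: "a < p" using pq a_def by simp
    have "val_pq p q (u @ [a]) = real n"
    proof -
      have "real q * val_pq p q (u @ [a]) = real a + real p * real m"
        using q1 u(2) by (simp add: val_snoc field_simps)
      also have "\<dots> = real (p * m + a)" by simp
      also have "\<dots> = real q * real n" by (simp only: qn[symmetric] of_nat_mult)
      finally have "real q * val_pq p q (u @ [a]) = real q * real n" .
      then show ?thesis using q1 by simp
    qed
    moreover have "vw p (u @ [a])"
    proof (cases "u = []")
      case True
      then have "m = 0" using u by simp
      then have "a = q * n" using qn by simp
      then have "a \<noteq> 0" using False q1 by simp
      then show ?thesis using True ap by (simp add: vw_def alph_def)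
    next
      case False then show ?thesis using u ap by (auto simp: vw_def alph_def)
    qed
    ultimately show ?thesis by blast
  qed
qed

lemma rep_props: "vw p (rep_pq p q n) \<and> val_pq p q (rep_pq p q n) = real n"
proof -
  have "\<exists>!w. w \<in> lists (alph p) \<and> (w = [] \<or> hd w \<noteq> 0) \<and> val_pq p q w = real n"
    using exist uniq unfolding vw_def by blast
  then have "(\<lambda>w. w \<in> lists (alph p) \<and> (w = [] \<or> hd w \<noteq> 0) \<and> val_pq p q w = real n) (rep_pq p q n)"
    unfolding rep_pq_def by (rule theI')
  then show ?thesis by (simp add: vw_def)
qed

lemma L_char: "w \<in> L_pq p q \<longleftrightarrow> vw p w \<and> (\<exists>n. val_pq p q w = real n)"
proof
  assume "w \<in> L_pq p q"
  then show "vw p w \<and> (\<exists>n. val_pq p q w = real n)" using rep_props unfolding L_pq_def by auto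
next
  assume "vw p w \<and> (\<exists>n. val_pq p q w = real n)"
  then obtain n where "vw p w" "val_pq p q w = real n" by blast
  then have "w = rep_pq p q n" using uniq rep_props by blast
  then show "w \<in> L_pq p q" unfolding L_pq_def by simp
qed

lemma nv_L: "w \<in> L_pq p q \<Longrightarrow> val_pq p q w = real (nv p q w)"
  unfolding nv_def using L_char by auto

lemma rep_L: "rep_pq p q n \<in> L_pq p q" "nv p q (rep_pq p q n) = n"
  using rep_props by (auto simp: L_pq_def nv_def)

lemma L_lists: "w \<in> L_pq p q \<Longrightarrow> set w \<subseteq> alph p"
  using L_char by (auto simp: vw_def)

lemma L_snoc: "w @ [a] \<in> L_pq p q \<Longrightarrow> w \<in> L_pq p q \<and> a < p \<and> q * nv p q (w @ [a]) = p * nv p q w + a"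
proof -
  assume h: "w @ [a] \<in> L_pq p q"
  then obtain n where n: "val_pq p q (w @ [a]) = real n" "vw p (w @ [a])" using L_char by blast
  obtain m where m: "val_pq p q w = real m" using integral_prefix n by blast
  have "w \<in> L_pq p q" using L_char vw_butlast n m by blast
  moreover have "a < p" using vw_butlast n by blast
  moreover have "real (q * n) = real (p * m + a)"
    using n m q1 by (simp add: val_snoc field_simps)
  then have "q * n = p * m + a" by linarith
  then have "q * nv p q (w @ [a]) = p * nv p q w + a" using n m by (simp add: nv_def)
  ultimately show ?thesis by blast
qed

lemma L_prefix: "w @ z \<in> L_pq p q \<Longrightarrow> w \<in> L_pq p q"
proof (induct z rule: rev_induct)
  case Nil then show ?case by simp
next
  case (snoc a z) then show ?case using L_snoc[of "w @ z" a] by simp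
qed

lemma L_child: "w \<in> L_pq p q \<Longrightarrow> w \<noteq> [] \<Longrightarrow> a < p \<Longrightarrow> q dvd (p * nv p q w + a) \<Longrightarrow> w @ [a] \<in> L_pq p q"
proof -
  assume h: "w \<in> L_pq p q" "w \<noteq> []" "a < p" "q dvd (p * nv p q w + a)"
  then obtain k where k: "p * nv p q w + a = q * k" by blast
  have "real q * val_pq p q (w @ [a]) = real a + real p * real (nv p q w)"
    using q1 nv_L[OF h(1)] by (simp add: val_snoc field_simps)
  also have "\<dots> = real (p * nv p q w + a)" by simp
  also have "\<dots> = real q * real k" by (simp only: k of_nat_mult)
  finally have "real q * val_pq p q (w @ [a]) = real q * real k" .
  then have "val_pq p q (w @ [a]) = real k" using q1 by simp
  moreover have "vw p (w @ [a])" using h L_char by (cases w) (auto simp: vw_def alph_def)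
  ultimately show ?thesis using L_char by blast
qed

end

fun lw :: "nat \<Rightarrow> nat \<Rightarrow> nat \<Rightarrow> nat \<Rightarrow> nat list" where
  "lw p q n 0 = []"
| "lw p q n (Suc k) = wj0 p q (n mod q) # lw p q ((p * n + wj0 p q (n mod q)) div q) k"

lemma divh: "(q::nat) > 0 \<Longrightarrow> q * X = Y \<Longrightarrow> X = Y div q"
  by auto

context
  fixes p q :: nat
  assumes q1: "q > 1" and pq: "p > q" and cop: "coprime p q"
begin

lemma wj0_cond: "(int a + int p * int (n mod q)) mod int q = 0 \<longleftrightarrow> q dvd (p * n + a)"
proof -
  have "(int a + int p * int (n mod q)) mod int q = int ((a + p * (n mod q)) mod q)"
    by (simp add: zmod_int)
  also have "(a + p * (n mod q)) mod q = (a + (p * (n mod q)) mod q) mod q" by (rule mod_add_right_eq[symmetric])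
  also have "\<dots> = (a + (p * n) mod q) mod q" by (simp only: mod_mult_right_eq)
  also have "\<dots> = (p * n + a) mod q" by (simp only: mod_add_right_eq add.commute)
  finally have "(int a + int p * int (n mod q)) mod int q = int ((p * n + a) mod q)" .
  then show ?thesis by (simp add: dvd_eq_mod_eq_0)
qed

lemma c_props: "wj0 p q (n mod q) < p \<and> q dvd (p * n + wj0 p q (n mod q)) \<and>
   (\<forall>a. a < p \<and> q dvd (p * n + a) \<longrightarrow> wj0 p q (n mod q) \<le> a)"
proof -
  define r where "r = (p * n) mod q"
  have rq: "r < q" using q1 by (simp add: r_def)
  define a0 where "a0 = (if r = 0 then 0 else q - r)"
  have a0q: "a0 < q" using q1 rq by (simp add: a0_def)
  then have a0p: "a0 < p" using pq by simp
  have e: "p * n = q * (p * n div q) + r" by (simp add: r_def)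
  have "q dvd (p * n + a0)"
  proof (cases "r = 0")
    case True then show ?thesis using e by (simp add: a0_def) (metis dvd_triv_left)
  next
    case False
    then have "p * n + a0 = q * (p * n div q) + q" using e rq by (simp add: a0_def)
    then show ?thesis by simp
  qed
  then have ex: "a0 < p \<and> (int a0 + int p * int (n mod q)) mod int q = 0" using a0p wj0_cond[of a0 n] by simp
  have L1: "wj0 p q (n mod q) < p \<and> (int (wj0 p q (n mod q)) + int p * int (n mod q)) mod int q = 0"
    unfolding wj0_def by (rule LeastI[of _ a0]) (rule ex)
  have L2: "\<forall>a. a < p \<and> q dvd (p * n + a) \<longrightarrow> wj0 p q (n mod q) \<le> a"
  proof (intro allI impI)
    fix a assume "a < p \<and> q dvd (p * n + a)"
    then have "a < p \<and> (int a + int p * int (n mod q)) mod int q = 0" using wj0_cond[of a n] by simp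
    then show "wj0 p q (n mod q) \<le> a" unfolding wj0_def by (rule Least_le)
  qed
  have "q dvd (p * n + wj0 p q (n mod q))" using L1 wj0_cond[of "wj0 p q (n mod q)" n] by simp
  then show ?thesis using L1 L2 by blast
qed

lemma F1: "y \<in> L_pq p q \<Longrightarrow> y \<noteq> [] \<Longrightarrow> y @ lw p q (nv p q y) k \<in> L_pq p q"
proof (induct k arbitrary: y)
  case 0 then show ?case by simp
next
  case (Suc k)
  let ?c = "wj0 p q (nv p q y mod q)"
  have yc: "y @ [?c] \<in> L_pq p q" using L_child[OF q1 pq cop Suc.prems] c_props by blast
  have "q * nv p q (y @ [?c]) = p * nv p q y + ?c" using L_snoc[OF q1 pq cop yc] by blast
  then have nvc: "nv p q (y @ [?c]) = (p * nv p q y + ?c) div q" using q1 divh by simp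
  have "(y @ [?c]) @ lw p q (nv p q (y @ [?c])) k \<in> L_pq p q" using Suc.hyps[OF yc] by simp
  then show ?case by (simp add: nvc)
qed

lemma F2: "y \<in> L_pq p q \<Longrightarrow> y \<noteq> [] \<Longrightarrow> y @ z \<in> L_pq p q \<Longrightarrow> length z = k \<Longrightarrow>
   z = lw p q (nv p q y) k \<or> (lw p q (nv p q y) k, z) \<in> lexord {(a, b). a < b}"
proof (induct k arbitrary: y z)
  case 0 then show ?case by simp
next
  case (Suc k)
  then obtain b z' where z: "z = b # z'" by (cases z) auto
  let ?c = "wj0 p q (nv p q y mod q)"
  have yb: "y @ [b] \<in> L_pq p q" using L_prefix[OF q1 pq cop, of "y @ [b]" z'] Suc.prems z by simp
  have sn: "b < p" "q * nv p q (y @ [b]) = p * nv p q y + b" using L_snoc[OF q1 pq cop yb] by auto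
  then have "q dvd (p * nv p q y + b)" by (metis dvd_triv_left)
  then have cb: "?c \<le> b" using c_props sn by blast
  show ?case
  proof (cases "?c = b")
    case False then show ?thesis using cb z by simp
  next
    case True
    have nvc: "nv p q (y @ [b]) = (p * nv p q y + ?c) div q" using sn True q1 divh by simp
    have "z' = lw p q (nv p q (y @ [b])) k \<or> (lw p q (nv p q (y @ [b])) k, z') \<in> lexord {(a, b). a < b}"
      using Suc.hyps[OF yb] Suc.prems z by simp
    then show ?thesis using z True nvc by auto
  qed
qed

lemma F3: "n mod q ^ k = n' mod q ^ k \<Longrightarrow> lw p q n k = lw p q n' k"
proof (induct k arbitrary: n n')
  case 0 then show ?case by simp
next
  case (Suc k)
  have "n mod q ^ Suc k mod q = n' mod q ^ Suc k mod q" using Suc.prems by simp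
  moreover have "q dvd q ^ Suc k" by simp
  ultimately have "n mod q = n' mod q" by (simp add: mod_mod_cancel)
  then have cc: "wj0 p q (n mod q) = wj0 p q (n' mod q)" by simp
  let ?c = "wj0 p q (n mod q)"
  define A where "A = p * n + ?c"
  define A' where "A' = p * n' + ?c"
  have "(p * n) mod q ^ Suc k = (p * n') mod q ^ Suc k" by (rule mod_mult_cong[OF refl Suc.prems])
  then have m0: "A mod q ^ Suc k = A' mod q ^ Suc k" unfolding A_def A'_def by (rule mod_add_cong[OF _ refl])
  have d1: "A mod q = 0" "A' mod q = 0" using c_props[of n] c_props[of n'] cc
    by (auto simp: A_def A'_def dvd_eq_mod_eq_0)
  have h1: "A mod (q * q ^ k) = q * (A div q mod q ^ k)" using mod_mult2_eq[of A q "q ^ k"] d1 by simp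
  have h2: "A' mod (q * q ^ k) = q * (A' div q mod q ^ k)" using mod_mult2_eq[of A' q "q ^ k"] d1 by simp
  have "q * (A div q mod q ^ k) = q * (A' div q mod q ^ k)" using m0 h1 h2 by (simp only: power_Suc)
  then have "A div q mod q ^ k = A' div q mod q ^ k" using q1 by simp
  then have "lw p q (A div q) k = lw p q (A' div q) k" by (rule Suc.hyps)
  then show ?case using cc by (simp only: lw.simps A_def A'_def)
qed

lemma F5: "y @ z \<in> L_pq p q \<Longrightarrow> y' @ z \<in> L_pq p q \<Longrightarrow>
   nv p q y mod q ^ length z = nv p q y' mod q ^ length z"
proof (induct z arbitrary: y y')
  case Nil then show ?case by simp
next
  case (Cons b z)
  have yb: "y @ [b] \<in> L_pq p q" "y' @ [b] \<in> L_pq p q"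
    using L_prefix[OF q1 pq cop, of "y @ [b]" z] L_prefix[OF q1 pq cop, of "y' @ [b]" z] Cons.prems by auto
  have IH: "nv p q (y @ [b]) mod q ^ length z = nv p q (y' @ [b]) mod q ^ length z"
    using Cons.hyps[of "y @ [b]" "y' @ [b]"] Cons.prems by simp
  have s1: "q * nv p q (y @ [b]) = p * nv p q y + b" using L_snoc[OF q1 pq cop yb(1)] by blast
  have s2: "q * nv p q (y' @ [b]) = p * nv p q y' + b" using L_snoc[OF q1 pq cop yb(2)] by blast
  have "(q * nv p q (y @ [b])) mod (q * q ^ length z) = (q * nv p q (y' @ [b])) mod (q * q ^ length z)"
    using IH by (simp add: mod_mult_mult1)
  then have "[p * nv p q y + b = p * nv p q y' + b] (mod q ^ Suc (length z))"
    by (simp add: cong_def s1 s2)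
  then have "[p * nv p q y = p * nv p q y'] (mod q ^ Suc (length z))"
    by (simp add: cong_add_rcancel_nat)
  moreover have "coprime p (q ^ Suc (length z))" using cop by simp
  ultimately have "[nv p q y = nv p q y'] (mod q ^ Suc (length z))"
    using cong_mult_lcancel_nat by blast
  then show ?case by (simp add: cong_def)
qed

lemma F4: "lw p q n (Suc k) \<noteq> [] \<and> (\<exists>j<q. last (lw p q n (Suc k)) = wj0 p q j)"
proof (induct k arbitrary: n)
  case 0
  have "n mod q < q" using q1 by simp
  then show ?case by auto
next
  case (Suc k)
  have "lw p q n (Suc (Suc k)) = wj0 p q (n mod q) # lw p q ((p * n + wj0 p q (n mod q)) div q) (Suc k)"
    by (rule lw.simps(2))
  then show ?case using Suc[of "(p * n + wj0 p q (n mod q)) div q"] by simp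
qed

end

definition Sd :: "nat \<Rightarrow> nat \<Rightarrow> (nat \<Rightarrow> 'b) \<Rightarrow> nat \<Rightarrow> nat \<Rightarrow> nat list \<Rightarrow> nat list + ((nat list \<Rightarrow> 'b option) \<times> nat list)" where
  "Sd p q x K M w = (if length w \<le> M then Inl w else Inr (factor p q x (take (length w - K) w) K, drop (length w - K) w))"

lemma Sd_split: "length v = K \<Longrightarrow> Sd p q x K M (u @ v) = (if length (u @ v) \<le> M then Inl (u @ v) else Inr (factor p q x u K, v))"
  by (simp add: Sd_def)

lemma length_lw[simp]: "length (lw p q n k) = k"
  by (induct k arbitrary: n) auto

lemma extends_factor: "extends h (factor p q x w h) (factor p q x w (Suc h))"
  unfolding extends_def factor_def by (rule ext) auto

lemma factor_sub: "factor p q x (u @ [b]) h = (\<lambda>t. factor p q x u (Suc h) (b # t))"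
  unfolding factor_def by (rule ext) auto

context
  fixes p q :: nat and x :: "nat \<Rightarrow> 'b" and B :: "'b set" and h :: nat
  assumes q1: "q > 1" and pq: "p > q" and cop: "coprime p q"
    and finB: "finite B" and xB: "\<forall>n. x n \<in> B"
    and H: "\<forall>U \<in> F_inf p q x h. \<forall>j < q. \<forall>U1 U2.
            U1 \<in> F_inf_a p q x (Suc h) (wj0 p q j) \<and> U2 \<in> F_inf_a p q x (Suc h) (wj0 p q j) \<and>
            extends h U U1 \<and> extends h U U2 \<longrightarrow> U1 = U2"
begin

lemma fin_factors: "finite (range (\<lambda>w. factor p q x w k))"
proof -
  let ?W = "{u. set u \<subseteq> alph p \<and> length u \<le> k}"
  have fW: "finite ?W" by (rule finite_lists_length_le) (simp add: alph_def)
  have "range (\<lambda>w. factor p q x w k) \<subseteq> {f. \<forall>u. (u \<in> ?W \<longrightarrow> f u \<in> insert None (Some ` B)) \<and> (u \<notin> ?W \<longrightarrow> f u = None)}"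
  proof (clarify, intro conjI impI)
    fix w u
    show "factor p q x w k u \<in> insert None (Some ` B)" using xB by (auto simp: factor_def)
    assume "u \<notin> ?W"
    then show "factor p q x w k u = None"
      using L_lists[OF q1 pq cop, of "w @ u"] by (auto simp: factor_def)
  qed
  moreover have "finite {f. \<forall>u. (u \<in> ?W \<longrightarrow> f u \<in> insert None (Some ` B)) \<and> (u \<notin> ?W \<longrightarrow> f u = None)}"
    by (rule finite_set_of_finite_funs) (use fW finB in auto)
  ultimately show ?thesis by (rule finite_subset)
qed

definition "Exc = {y \<in> L_pq p q. factor p q x y h \<notin> F_inf p q x h \<or> factor p q x y (Suc h) \<notin> F_inf p q x (Suc h)}"

lemma fin_exc_k: "finite {y \<in> L_pq p q. factor p q x y k \<notin> F_inf p q x k}"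
proof -
  have "{y \<in> L_pq p q. factor p q x y k \<notin> F_inf p q x k} \<subseteq>
     (\<Union>U \<in> range (\<lambda>w. factor p q x w k) - F_inf p q x k. {w \<in> L_pq p q. factor p q x w k = U})"
    by auto
  moreover have "finite (\<Union>U \<in> range (\<lambda>w. factor p q x w k) - F_inf p q x k. {w \<in> L_pq p q. factor p q x w k = U})"
    using fin_factors by (intro finite_UN_I) (auto simp: F_inf_def)
  ultimately show ?thesis by (rule finite_subset)
qed

lemma fin_Ex: "finite Exc"
proof -
  have "Exc = {y \<in> L_pq p q. factor p q x y h \<notin> F_inf p q x h} \<union> {y \<in> L_pq p q. factor p q x y (Suc h) \<notin> F_inf p q x (Suc h)}"
    unfolding Exc_def by auto
  then show ?thesis using fin_exc_k by simp
qed

lemma inFa: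
  assumes y: "y \<in> L_pq p q" "y \<noteq> []" "y \<notin> Exc"
  shows "factor p q x y (Suc h) \<in> F_inf_a p q x (Suc h) (last (lw p q (nv p q y) (Suc h)))"
proof -
  let ?l = "lw p q (nv p q y) (Suc h)"
  have inF: "factor p q x y (Suc h) \<in> F_inf p q x (Suc h)" using y by (auto simp: Exc_def)
  have l1: "y @ ?l \<in> L_pq p q" using F1[OF q1 pq cop y(1,2)] .
  have l2: "?l \<noteq> []" using F4[OF q1 pq cop] by blast
  have l3: "\<forall>v. factor p q x y (Suc h) v \<noteq> None \<and> length v = Suc h \<longrightarrow> radix_le ?l v"
  proof (intro allI impI)
    fix v assume "factor p q x y (Suc h) v \<noteq> None \<and> length v = Suc h"
    then have "y @ v \<in> L_pq p q" "length v = Suc h" by (auto simp: factor_def split: if_splits)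
    then show "radix_le ?l v" using F2[OF q1 pq cop y(1,2), of v "Suc h"] by (auto simp: radix_le_def)
  qed
  have l4: "factor p q x y (Suc h) ?l \<noteq> None" using l1 by (simp add: factor_def)
  have l0: "length ?l = Suc h" by (rule length_lw)
  have "\<exists>u. factor p q x y (Suc h) u \<noteq> None \<and> length u = Suc h \<and>
         (\<forall>v. factor p q x y (Suc h) v \<noteq> None \<and> length v = Suc h \<longrightarrow> radix_le u v) \<and>
         u \<noteq> [] \<and> last u = last ?l"
    by (rule exI[of _ ?l]) (use l0 l2 l3 l4 in blast)
  then show ?thesis unfolding F_inf_a_def using inF by blast
qed

lemma core:
  assumes y: "y \<in> L_pq p q" "y \<noteq> []" "y \<notin> Exc"
    and y': "y' \<in> L_pq p q" "y' \<noteq> []" "y' \<notin> Exc"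
    and z: "y @ z \<in> L_pq p q" "y' @ z \<in> L_pq p q" "length z = Suc h"
    and eq: "factor p q x y h = factor p q x y' h"
  shows "factor p q x y (Suc h) = factor p q x y' (Suc h)"
proof -
  have "nv p q y mod q ^ Suc h = nv p q y' mod q ^ Suc h" using F5[OF q1 pq cop z(1,2)] z(3) by simp
  then have ll: "lw p q (nv p q y) (Suc h) = lw p q (nv p q y') (Suc h)" by (rule F3[OF q1 pq cop])
  obtain j where j: "j < q" "last (lw p q (nv p q y) (Suc h)) = wj0 p q j" using F4[OF q1 pq cop] by blast
  have a1: "factor p q x y (Suc h) \<in> F_inf_a p q x (Suc h) (wj0 p q j)" using inFa[OF y] unfolding j(2) .
  have a2: "factor p q x y' (Suc h) \<in> F_inf_a p q x (Suc h) (wj0 p q j)" using inFa[OF y'] unfolding ll[symmetric] j(2) .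
  have U: "factor p q x y h \<in> F_inf p q x h" using y by (auto simp: Exc_def)
  have e1: "extends h (factor p q x y h) (factor p q x y (Suc h))" by (rule extends_factor)
  have e2: "extends h (factor p q x y h) (factor p q x y' (Suc h))" using extends_factor eq by metis
  show ?thesis using H U j(1) a1 a2 e1 e2 by blast
qed

end

context
  fixes p q :: nat and x :: "nat \<Rightarrow> 'b" and B :: "'b set" and h :: nat
  assumes q1: "q > 1" and pq: "p > q" and cop: "coprime p q"
    and finB: "finite B" and xB: "\<forall>n. x n \<in> B"
    and H: "\<forall>U \<in> F_inf p q x h. \<forall>j < q. \<forall>U1 U2.
            U1 \<in> F_inf_a p q x (Suc h) (wj0 p q j) \<and> U2 \<in> F_inf_a p q x (Suc h) (wj0 p q j) \<and>
            extends h U U1 \<and> extends h U U2 \<longrightarrow> U1 = U2"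
begin

lemma decomp:
  assumes "length w \<ge> K"
  obtains u v where "w = u @ v" "length v = K"
proof -
  have "w = take (length w - K) w @ drop (length w - K) w" by simp
  moreover have "length (drop (length w - K) w) = K" using assms by simp
  ultimately show ?thesis using that by blast
qed

lemma WD:
  assumes M0: "\<forall>y\<in>Exc p q x h. length y \<le> M0"
    and wa: "w @ [a] \<in> L_pq p q" and wa': "w' @ [a] \<in> L_pq p q"
    and eq: "Sd p q x (Suc h) (M0 + Suc h) w = Sd p q x (Suc h) (M0 + Suc h) w'"
  shows "Sd p q x (Suc h) (M0 + Suc h) (w @ [a]) = Sd p q x (Suc h) (M0 + Suc h) (w' @ [a])"
proof (cases "length w \<le> M0 + Suc h")
  case True
  then have "Sd p q x (Suc h) (M0 + Suc h) w' = Inl w" using eq by (simp add: Sd_def)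
  then have "w' = w" by (simp add: Sd_def split: if_splits)
  then show ?thesis by simp
next
  case False
  have lw': "\<not> length w' \<le> M0 + Suc h"
  proof
    assume "length w' \<le> M0 + Suc h"
    then have "Sd p q x (Suc h) (M0 + Suc h) w = Inl w'" using eq by (simp add: Sd_def)
    then show False using False by (simp add: Sd_def split: if_splits)
  qed
  have "length w \<ge> Suc h" using False by simp
  then obtain u v where uv: "w = u @ v" "length v = Suc h" by (rule decomp)
  have "length w' \<ge> Suc h" using lw' by simp
  then obtain u' v' where uv': "w' = u' @ v'" "length v' = Suc h" by (rule decomp)
  have "Inr (factor p q x u (Suc h), v) = (Inr (factor p q x u' (Suc h), v') :: nat list + _)"
    using eq False lw' uv uv' Sd_split[of v "Suc h" p q x "M0 + Suc h" u] Sd_split[of v' "Suc h" p q x "M0 + Suc h" u']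
    by simp
  then have fu: "factor p q x u (Suc h) = factor p q x u' (Suc h)" and vv: "v = v'" by auto
  obtain b z0 where v: "v = b # z0" using uv(2) by (cases v) auto
  have w1: "w @ [a] = (u @ [b]) @ (z0 @ [a])" using uv v by simp
  have w2: "w' @ [a] = (u' @ [b]) @ (z0 @ [a])" using uv' v vv by simp
  have lz: "length (z0 @ [a]) = Suc h" using uv(2) v by simp
  have y: "u @ [b] \<in> L_pq p q" using L_prefix[OF q1 pq cop, of "u @ [b]" "z0 @ [a]"] wa w1 by simp
  have y': "u' @ [b] \<in> L_pq p q" using L_prefix[OF q1 pq cop, of "u' @ [b]" "z0 @ [a]"] wa' w2 by simp
  have ly: "length (u @ [b]) > M0" using False uv v by simp
  have ly': "length (u' @ [b]) > M0" using lw' uv' v vv by simp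
  have ny: "u @ [b] \<notin> Exc p q x h"
  proof
    assume "u @ [b] \<in> Exc p q x h" then have "length (u @ [b]) \<le> M0" using M0 by blast
    with ly show False by simp
  qed
  have ny': "u' @ [b] \<notin> Exc p q x h"
  proof
    assume "u' @ [b] \<in> Exc p q x h" then have "length (u' @ [b]) \<le> M0" using M0 by blast
    with ly' show False by simp
  qed
  have fh: "factor p q x (u @ [b]) h = factor p q x (u' @ [b]) h" by (simp add: factor_sub fu)
  have core': "factor p q x (u @ [b]) (Suc h) = factor p q x (u' @ [b]) (Suc h)"
    by (rule core[OF q1 pq cop finB xB H y _ ny y' _ ny' _ _ lz fh]) (use wa wa' w1 w2 in auto)
  have s1: "Sd p q x (Suc h) (M0 + Suc h) (w @ [a]) = Inr (factor p q x (u @ [b]) (Suc h), z0 @ [a])"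
    unfolding w1 using Sd_split[OF lz, of p q x "M0 + Suc h" "u @ [b]"] False w1 lz by (simp add: uv)
  have s2: "Sd p q x (Suc h) (M0 + Suc h) (w' @ [a]) = Inr (factor p q x (u' @ [b]) (Suc h), z0 @ [a])"
    unfolding w2 using Sd_split[OF lz, of p q x "M0 + Suc h" "u' @ [b]"] lw' w2 lz by (simp add: uv')
  show ?thesis using s1 s2 core' by simp
qed

lemma OUT:
  assumes w: "w \<in> L_pq p q" and w': "w' \<in> L_pq p q"
    and eq: "Sd p q x (Suc h) (M0 + Suc h) w = Sd p q x (Suc h) (M0 + Suc h) w'"
  shows "x (nv p q w) = x (nv p q w')"
proof (cases "length w \<le> M0 + Suc h")
  case True
  then have "Sd p q x (Suc h) (M0 + Suc h) w' = Inl w" using eq by (simp add: Sd_def)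
  then have "w' = w" by (simp add: Sd_def split: if_splits)
  then show ?thesis by simp
next
  case False
  have lw': "\<not> length w' \<le> M0 + Suc h"
  proof
    assume "length w' \<le> M0 + Suc h"
    then have "Sd p q x (Suc h) (M0 + Suc h) w = Inl w'" using eq by (simp add: Sd_def)
    then show False using False by (simp add: Sd_def split: if_splits)
  qed
  have "length w \<ge> Suc h" using False by simp
  then obtain u v where uv: "w = u @ v" "length v = Suc h" by (rule decomp)
  have "length w' \<ge> Suc h" using lw' by simp
  then obtain u' v' where uv': "w' = u' @ v'" "length v' = Suc h" by (rule decomp)
  have "Inr (factor p q x u (Suc h), v) = (Inr (factor p q x u' (Suc h), v') :: nat list + _)"
    using eq False lw' uv uv' Sd_split[of v "Suc h" p q x "M0 + Suc h" u] Sd_split[of v' "Suc h" p q x "M0 + Suc h" u']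
    by simp
  then have fu: "factor p q x u (Suc h) = factor p q x u' (Suc h)" and vv: "v = v'" by auto
  have "factor p q x u (Suc h) v = Some (x (nv p q w))" using w uv by (simp add: factor_def nv_def)
  moreover have "factor p q x u' (Suc h) v = Some (x (nv p q w'))" using w' uv' vv by (simp add: factor_def nv_def)
  ultimately show ?thesis using fu by simp
qed

end

theorem mainTheorem12:
  fixes p q :: nat and x :: "nat \<Rightarrow> 'b" and B :: "'b set"
  assumes "q > 1" and "p > q" and "coprime p q"
    and "finite B" and "\<forall>n. x n \<in> B"
    and "\<exists>h. \<forall>U \<in> F_inf p q x h. \<forall>j < q. \<forall>U1 U2.
            U1 \<in> F_inf_a p q x (Suc h) (wj0 p q j) \<and> U2 \<in> F_inf_a p q x (Suc h) (wj0 p q j) \<and>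
            extends h U U1 \<and> extends h U U2 \<longrightarrow> U1 = U2"
  shows "pq_automatic p q x"
proof -
  note q1 = assms(1) and pq = assms(2) and cop = assms(3)
  from assms(6) obtain h where H: "\<forall>U \<in> F_inf p q x h. \<forall>j < q. \<forall>U1 U2.
            U1 \<in> F_inf_a p q x (Suc h) (wj0 p q j) \<and> U2 \<in> F_inf_a p q x (Suc h) (wj0 p q j) \<and>
            extends h U U1 \<and> extends h U U2 \<longrightarrow> U1 = U2" by blast
  note ctx = assms(1-5) H
  have fE: "finite (length ` Exc p q x h)" using fin_Ex[OF ctx] by simp
  then obtain M0 where M0': "\<forall>n\<in>length ` Exc p q x h. n \<le> M0" using finite_nat_set_iff_bounded_le by blast
  then have M0: "\<forall>y\<in>Exc p q x h. length y \<le> M0" by blast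
  define S where "S = Sd p q x (Suc h) (M0 + Suc h)"
  define L where "L = L_pq p q"
  define Qd where "Qd = S ` lists (alph p)"
  define dd where "dd = (\<lambda>s a. if \<exists>w. w \<in> L \<and> w @ [a] \<in> L \<and> S w = s
      then S ((SOME w. w \<in> L \<and> w @ [a] \<in> L \<and> S w = s) @ [a]) else s)"
  define td where "td = (\<lambda>s. x (nv p q (SOME w. w \<in> L \<and> S w = s)))"
  have finQ: "finite Qd"
  proof -
    have "Qd \<subseteq> Inl ` {w. set w \<subseteq> alph p \<and> length w \<le> M0 + Suc h} \<union>
       Inr ` (range (\<lambda>w. factor p q x w (Suc h)) \<times> {v. set v \<subseteq> alph p \<and> length v \<le> Suc h})"
    proof
      fix s assume "s \<in> Qd"
      then obtain w where w: "set w \<subseteq> alph p" "s = S w" unfolding Qd_def by (auto simp: in_lists_conv_set)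
      show "s \<in> Inl ` {w. set w \<subseteq> alph p \<and> length w \<le> M0 + Suc h} \<union>
         Inr ` (range (\<lambda>w. factor p q x w (Suc h)) \<times> {v. set v \<subseteq> alph p \<and> length v \<le> Suc h})"
      proof (cases "length w \<le> M0 + Suc h")
        case True then show ?thesis using w by (simp add: S_def Sd_def)
      next
        case False
        have "set (drop (length w - Suc h) w) \<subseteq> alph p" using w(1) set_drop_subset by fast
        then show ?thesis using w False by (simp add: S_def Sd_def)
      qed
    qed
    moreover have "finite {w. set w \<subseteq> alph p \<and> length w \<le> M0 + Suc h}"
      by (rule finite_lists_length_le) (simp add: alph_def)
    moreover have "finite {v. set v \<subseteq> alph p \<and> length v \<le> Suc h}"
      by (rule finite_lists_length_le) (simp add: alph_def)
    ultimately show ?thesis using fin_factors[OF ctx] by (meson finite_SigmaI finite_UnI finite_imageI finite_subset)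
  qed
  have dQ: "dd s a \<in> Qd" if "s \<in> Qd" for s a
  proof (cases "\<exists>w. w \<in> L \<and> w @ [a] \<in> L \<and> S w = s")
    case True
    let ?w = "SOME w. w \<in> L \<and> w @ [a] \<in> L \<and> S w = s"
    have "?w \<in> L \<and> ?w @ [a] \<in> L \<and> S ?w = s" using someI_ex[OF True] .
    then have "set (?w @ [a]) \<subseteq> alph p" using L_lists[OF q1 pq cop] unfolding L_def by blast
    then have "?w @ [a] \<in> lists (alph p)" by (simp only: in_lists_conv_set) blast
    then have "S (?w @ [a]) \<in> Qd" unfolding Qd_def by (rule imageI)
    then show ?thesis using True by (simp add: dd_def)
  next
    case False
    then have "dd s a = s" unfolding dd_def by (simp only: if_False)
    then show ?thesis using that by simp
  qed
  have S0: "S [] \<in> Qd" unfolding Qd_def by simp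
  have run: "w \<in> L \<Longrightarrow> foldl dd (S []) w = S w" for w
  proof (induct w rule: rev_induct)
    case Nil then show ?case by simp
  next
    case (snoc a w)
    have wL: "w \<in> L" using L_prefix[OF q1 pq cop, of w "[a]"] snoc.prems unfolding L_def by simp
    have ex: "\<exists>w'. w' \<in> L \<and> w' @ [a] \<in> L \<and> S w' = S w" using wL snoc.prems by blast
    let ?w = "SOME w'. w' \<in> L \<and> w' @ [a] \<in> L \<and> S w' = S w"
    have sw: "?w \<in> L \<and> ?w @ [a] \<in> L \<and> S ?w = S w" using someI_ex[OF ex] .
    have "S (?w @ [a]) = S (w @ [a])"
      using WD[OF ctx M0, of ?w a w] sw snoc.prems unfolding S_def L_def by blast
    then show ?case using snoc.hyps[OF wL] ex by (simp add: dd_def)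
  qed
  have out: "td (S (rep_pq p q n)) = x n" for n
  proof -
    have rL: "rep_pq p q n \<in> L" using rep_L[OF q1 pq cop] unfolding L_def by blast
    have ex: "\<exists>w. w \<in> L \<and> S w = S (rep_pq p q n)" using rL by blast
    let ?w = "SOME w. w \<in> L \<and> S w = S (rep_pq p q n)"
    have sw: "?w \<in> L \<and> S ?w = S (rep_pq p q n)" using someI_ex[OF ex] .
    have "x (nv p q ?w) = x (nv p q (rep_pq p q n))"
      using OUT[OF ctx, of ?w "rep_pq p q n" M0] sw rL unfolding S_def L_def by blast
    then show ?thesis using rep_L(2)[OF q1 pq cop] by (simp add: td_def)
  qed
  obtain f :: "_ \<Rightarrow> nat" and N where f: "f ` Qd = {i. i < N}" "inj_on f Qd"
    using finite_imp_inj_to_nat_seg[OF finQ] by blast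
  define g where "g = the_inv_into Qd f"
  have gf: "s \<in> Qd \<Longrightarrow> g (f s) = s" for s unfolding g_def using f(2) by (rule the_inv_into_f_f)
  define del where "del = (\<lambda>s a. f (dd (g s) a))"
  have fold: "foldl del (f (S [])) w = f (foldl dd (S []) w) \<and> foldl dd (S []) w \<in> Qd" for w
  proof (induct w rule: rev_induct)
    case Nil then show ?case using S0 by simp
  next
    case (snoc a w)
    then show ?case using gf dQ by (simp add: del_def)
  qed
  show ?thesis
    unfolding pq_automatic_def
  proof (intro exI conjI)
    show "finite (f ` Qd)" using finQ by simp
    show "f (S []) \<in> f ` Qd" using S0 by simp
    show "\<forall>s\<in>f ` Qd. \<forall>a<p. del s a \<in> f ` Qd" using gf dQ by (auto simp: del_def)
    show "\<forall>n. x n = (\<lambda>s. td (g s)) (foldl del (f (S [])) (rep_pq p q n))"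
    proof
      fix n
      have rL: "rep_pq p q n \<in> L" using rep_L[OF q1 pq cop] unfolding L_def by blast
      have "foldl del (f (S [])) (rep_pq p q n) = f (S (rep_pq p q n))" using fold run[OF rL] by simp
      moreover have "S (rep_pq p q n) \<in> Qd" using run[OF rL] fold by metis
      ultimately show "x n = (\<lambda>s. td (g s)) (foldl del (f (S [])) (rep_pq p q n))" using gf out by simp
    qed
  qed
qed

end
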